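(* Let $(X,\beta,m)$ be a non-atomic standard probability space and $\tau$ an ergodic invertible measure-preserving map of $X$. Let $E\in\beta$ with $m(E)>0$ and $m\big(\bigcup_{k=1}^n\tau^{-k}(E)\big)<1$ for all $n\ge1$. Put $F=X\setminus E$ and $f=1_F-m(F)$. Then $\|\sum_{k=1}^n f\circ\tau^k\|_\infty\ge n\,m(E)$ for every $n\ge1$, and consequently $f$ is not a $\tau$-coboundary with transfer function in $L_\infty(X)$, i.e. there is no $G\in L_\infty(X)$ with $f=G-G\circ\tau$ a.e.
   Context: $1_F$ denotes the indicator function of $F$. *)

theory Defs
  imports "HOL-Analysis.Analysis" "HOL-Probability.Probability"
begin

definition standard_prob_space :: "'a::polish_space measure \<Rightarrow> bool" where
  "standard_prob_space M \<longleftrightarrow> prob_space M \<and> sets M = sets (borel :: 'a measure)"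

definition nonatomic :: "'a measure \<Rightarrow> bool" where
  "nonatomic M \<longleftrightarrow> (\<forall>A\<in>sets M. 0 < measure M A \<longrightarrow>
      (\<exists>B\<in>sets M. B \<subseteq> A \<and> 0 < measure M B \<and> measure M B < measure M A))"

definition meas_preserving :: "'a measure \<Rightarrow> ('a \<Rightarrow> 'a) \<Rightarrow> bool" where
  "meas_preserving M T \<longleftrightarrow> T \<in> measurable M M \<and>
      (\<forall>A\<in>sets M. emeasure M (T -` A \<inter> space M) = emeasure M A)"

definition invertible_mpt :: "'a measure \<Rightarrow> ('a \<Rightarrow> 'a) \<Rightarrow> bool" where
  "invertible_mpt M T \<longleftrightarrow> meas_preserving M T \<and> bij_betw T (space M) (space M) \<and>
      meas_preserving M (inv_into (space M) T)"

definition ergodic :: "'a measure \<Rightarrow> ('a \<Rightarrow> 'a) \<Rightarrow> bool" where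
  "ergodic M T \<longleftrightarrow> (\<forall>A\<in>sets M. T -` A \<inter> space M = A \<longrightarrow>
      measure M A = 0 \<or> measure M A = 1)"

definition Linf :: "'a measure \<Rightarrow> ('a \<Rightarrow> real) \<Rightarrow> bool" where
  "Linf M G \<longleftrightarrow> G \<in> borel_measurable M \<and> (\<exists>C. AE x in M. \<bar>G x\<bar> \<le> C)"

definition Linf_norm :: "'a measure \<Rightarrow> ('a \<Rightarrow> real) \<Rightarrow> ereal" where
  "Linf_norm M g = esssup M (\<lambda>x. ereal \<bar>g x\<bar>)"

end

theory Submission
  imports Defs
begin

lemma AE_pull:
  assumes "meas_preserving M T" "AE x in M. P x"
  shows "AE x in M. P (T x)"
proof -
  from assms(2) obtain N where N: "{x \<in> space M. \<not> P x} \<subseteq> N" "emeasure M N = 0" "N \<in> sets M"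
    by (rule AE_E)
  have T: "T \<in> measurable M M" and pres: "\<And>A. A \<in> sets M \<Longrightarrow> emeasure M (T -` A \<inter> space M) = emeasure M A"
    using assms(1) unfolding meas_preserving_def by auto
  show ?thesis
  proof (rule AE_I[where N="T -` N \<inter> space M"])
    show "{x \<in> space M. \<not> P (T x)} \<subseteq> T -` N \<inter> space M"
      using N(1) measurable_space[OF T] by auto
    show "emeasure M (T -` N \<inter> space M) = 0" using pres[OF N(3)] N(2) by simp
    show "T -` N \<inter> space M \<in> sets M" using measurable_sets[OF T N(3)] .
  qed
qed

lemma AE_pull_pow:
  assumes "meas_preserving M T"
  shows "AE x in M. P x \<Longrightarrow> AE x in M. P ((T ^^ k) x)"
proof (induction k arbitrary: P)
  case 0 then show ?case by simp
next
  case (Suc k)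
  have "AE x in M. P ((T ^^ k) x)" using Suc by blast
  then have "AE x in M. P ((T ^^ k) (T x))" by (rule AE_pull[OF assms])
  then show ?case by (simp add: funpow_Suc_right del: funpow.simps)
qed

lemma pow_space:
  assumes "meas_preserving M T" "x \<in> space M"
  shows "(T ^^ k) x \<in> space M"
proof (induction k)
  case 0 then show ?case using assms by simp
next
  case (Suc k)
  have T: "T \<in> measurable M M" using assms(1) unfolding meas_preserving_def by auto
  show ?case using measurable_space[OF T Suc] by simp
qed

lemma AE_pos_ex:
  assumes "AE x in M. P x" "A \<in> sets M" "measure M A > 0"
  shows "\<exists>x\<in>A. P x"
proof (rule ccontr)
  assume nt: "\<not> (\<exists>x\<in>A. P x)"
  from assms(1) obtain N where N: "{x \<in> space M. \<not> P x} \<subseteq> N" "emeasure M N = 0" "N \<in> sets M"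
    by (rule AE_E)
  have "A \<subseteq> N" using nt N(1) sets.sets_into_space[OF assms(2)] by auto
  then have "emeasure M A = 0" using emeasure_mono[OF _ N(3)] N(2) by (metis le_zero_eq)
  then show False using assms(3) by (simp add: measure_def)
qed

theorem mainTheorem6:
  fixes M :: "'a::polish_space measure" and \<tau> :: "'a \<Rightarrow> 'a" and E :: "'a set"
  assumes "standard_prob_space M" and "nonatomic M"
    and "invertible_mpt M \<tau>" and "ergodic M \<tau>"
    and "E \<in> sets M" and "measure M E > 0"
    and "\<And>n. n \<ge> 1 \<Longrightarrow> measure M (\<Union>k\<in>{1..n}. (\<tau> ^^ k) -` E \<inter> space M) < 1"
  defines "F \<equiv> space M - E"
  defines "f \<equiv> (\<lambda>x. indicator F x - measure M F)"
  shows "(\<forall>n::nat. n \<ge> 1 \<longrightarrow>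
            Linf_norm M (\<lambda>x. \<Sum>k=1..n. f ((\<tau> ^^ k) x)) \<ge> ereal (real n * measure M E))
         \<and> \<not> (\<exists>G. Linf M G \<and> (AE x in M. f x = G x - G (\<tau> x)))"
proof -
  interpret P: prob_space M using assms(1) unfolding standard_prob_space_def by auto
  have mp: "meas_preserving M \<tau>" using assms(3) unfolding invertible_mpt_def by auto
  have T: "\<tau> \<in> measurable M M" using mp unfolding meas_preserving_def by auto
  have powm: "(\<tau> ^^ k) \<in> measurable M M" for k
  proof (induction k)
    case (Suc k) then show ?case using measurable_comp[OF Suc T] by (simp add: o_def)
  qed simp
  have mF: "measure M F = 1 - measure M E"
    unfolding F_def using P.prob_compl[OF assms(5)] .
  define A where "A n = space M - (\<Union>k\<in>{1..n}. (\<tau> ^^ k) -` E \<inter> space M)" for n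
  have Asets: "A n \<in> sets M" for n
  proof -
    have "(\<Union>k\<in>{1..n}. (\<tau> ^^ k) -` E \<inter> space M) \<in> sets M"
      using measurable_sets[OF powm assms(5)] by (intro sets.finite_UN) auto
    then show ?thesis unfolding A_def by auto
  qed
  have Apos: "measure M (A n) > 0" if "n \<ge> 1" for n
  proof -
    have U: "(\<Union>k\<in>{1..n}. (\<tau> ^^ k) -` E \<inter> space M) \<in> sets M"
      using measurable_sets[OF powm assms(5)] by (intro sets.finite_UN) auto
    have "measure M (A n) = 1 - measure M (\<Union>k\<in>{1..n}. (\<tau> ^^ k) -` E \<inter> space M)"
      unfolding A_def using P.prob_compl[OF U] .
    then show ?thesis using assms(7)[OF that] by simp
  qed
  have sumA: "(\<Sum>k=1..n. f ((\<tau> ^^ k) x)) = real n * measure M E" if "x \<in> A n" for n x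
  proof -
    have "f ((\<tau> ^^ k) x) = measure M E" if "k \<in> {1..n}" for k
    proof -
      have "x \<in> space M" using \<open>x \<in> A n\<close> unfolding A_def by auto
      then have "(\<tau> ^^ k) x \<in> space M" using pow_space[OF mp] by auto
      moreover have "(\<tau> ^^ k) x \<notin> E" using \<open>x \<in> A n\<close> that unfolding A_def by auto
      ultimately show ?thesis unfolding f_def using mF by (simp add: indicator_def F_def)
    qed
    then show ?thesis by simp
  qed
  have part1: "Linf_norm M (\<lambda>x. \<Sum>k=1..n. f ((\<tau> ^^ k) x)) \<ge> ereal (real n * measure M E)"
    if "n \<ge> 1" for n
  proof (rule ccontr)
    assume "\<not> ?thesis"
    then have lt: "Linf_norm M (\<lambda>x. \<Sum>k=1..n. f ((\<tau> ^^ k) x)) < ereal (real n * measure M E)" by simp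
    have "AE x in M. ereal \<bar>\<Sum>k=1..n. f ((\<tau> ^^ k) x)\<bar> \<le> Linf_norm M (\<lambda>x. \<Sum>k=1..n. f ((\<tau> ^^ k) x))"
      unfolding Linf_norm_def by (rule esssup_AE)
    from AE_pos_ex[OF this Asets Apos[OF that]] obtain x where x: "x \<in> A n"
      "ereal \<bar>\<Sum>k=1..n. f ((\<tau> ^^ k) x)\<bar> \<le> Linf_norm M (\<lambda>x. \<Sum>k=1..n. f ((\<tau> ^^ k) x))" by blast
    have h: "ereal (real n * measure M E) \<le> ereal \<bar>\<Sum>k=1..n. f ((\<tau> ^^ k) x)\<bar>"
      using sumA[OF x(1)] by simp
    show False using leD[OF order_trans[OF h x(2)]] lt by blast
  qed
  have part2: "\<not> (\<exists>G. Linf M G \<and> (AE x in M. f x = G x - G (\<tau> x)))"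
  proof
    assume "\<exists>G. Linf M G \<and> (AE x in M. f x = G x - G (\<tau> x))"
    then obtain G C where cob: "AE x in M. f x = G x - G (\<tau> x)" and bd: "AE x in M. \<bar>G x\<bar> \<le> C"
      unfolding Linf_def by auto
    obtain n :: nat where n: "real n > 2 * \<bar>C\<bar> / measure M E + 1" using reals_Archimedean2 by blast
    have "2 * \<bar>C\<bar> / measure M E \<ge> 0" using assms(6) by simp
    then have "real n > 1" using n by linarith
    then have n1: "n \<ge> 1" by simp
    have big: "real n * measure M E > 2 * \<bar>C\<bar>"
    proof -
      have "real n * measure M E > (2 * \<bar>C\<bar> / measure M E + 1) * measure M E"
        using n assms(6) by (simp add: mult_strict_right_mono)
      also have "(2 * \<bar>C\<bar> / measure M E + 1) * measure M E = 2 * \<bar>C\<bar> + measure M E"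
        using assms(6) by (simp add: field_simps)
      finally show ?thesis using assms(6) by simp
    qed
    have ae1: "AE x in M. \<forall>k\<in>{1..n}. f ((\<tau> ^^ k) x) = G ((\<tau> ^^ k) x) - G (\<tau> ((\<tau> ^^ k) x))"
      by (rule AE_finite_allI) (auto intro: AE_pull_pow[OF mp cob])
    have ae2: "AE x in M. \<bar>G ((\<tau> ^^ 1) x)\<bar> \<le> C" by (rule AE_pull_pow[OF mp bd])
    have ae3: "AE x in M. \<bar>G ((\<tau> ^^ Suc n) x)\<bar> \<le> C" by (rule AE_pull_pow[OF mp bd])
    have "AE x in M. (\<forall>k\<in>{1..n}. f ((\<tau> ^^ k) x) = G ((\<tau> ^^ k) x) - G (\<tau> ((\<tau> ^^ k) x)))
       \<and> \<bar>G ((\<tau> ^^ 1) x)\<bar> \<le> C \<and> \<bar>G ((\<tau> ^^ Suc n) x)\<bar> \<le> C"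
      using ae1 ae2 ae3 by eventually_elim auto
    from AE_pos_ex[OF this Asets Apos[OF n1]] obtain x where x: "x \<in> A n"
      "\<forall>k\<in>{1..n}. f ((\<tau> ^^ k) x) = G ((\<tau> ^^ k) x) - G (\<tau> ((\<tau> ^^ k) x))"
      "\<bar>G ((\<tau> ^^ 1) x)\<bar> \<le> C" "\<bar>G ((\<tau> ^^ Suc n) x)\<bar> \<le> C" by blast
    have "(\<Sum>k=1..n. f ((\<tau> ^^ k) x)) = (\<Sum>k=1..n. G ((\<tau> ^^ k) x) - G ((\<tau> ^^ Suc k) x))"
      using x(2) by (intro sum.cong) auto
    also have "\<dots> = - (\<Sum>k=1..n. G ((\<tau> ^^ Suc k) x) - G ((\<tau> ^^ k) x))"
      by (simp add: sum_negf[symmetric])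
    also have "\<dots> = G ((\<tau> ^^ 1) x) - G ((\<tau> ^^ Suc n) x)"
      using sum_Suc_diff[of 1 n "\<lambda>k. G ((\<tau> ^^ k) x)"] n1 by simp
    finally have "real n * measure M E = G ((\<tau> ^^ 1) x) - G ((\<tau> ^^ Suc n) x)"
      using sumA[OF x(1)] by simp
    then show False using x(3,4) big by linarith
  qed
  show ?thesis using part1 part2 by blast
qed

end
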